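(* Let $q>0$, $\ell\in\{0,1,2,\ldots\}$ and $n\in\{1,2,3,\ldots\}$. Then $$\tilde\gamma_\ell^{(n)}(q)=(-1)^\ell\sum_{k=0}^{\ell}(-1)^k k!\binom{\ell}{k}s(n+1,k+1)\,\zeta_E^{(\ell-k)}(n+1,q),$$ where $\tilde\gamma_\ell^{(n)}$ denotes the $n$-th derivative of $\tilde\gamma_\ell$ with respect to $q$.
   Context: For $q>0$, $\zeta_E(z,q)=\sum_{n=0}^\infty (-1)^n (n+q)^{-z}$ for $\mathrm{Re}(z)>0$, extended by analytic continuation to an entire function of $z$; $\zeta_E^{(m)}(z,q)$ denotes $\frac{\partial^m}{\partial z^m}\zeta_E(z,q)$. The modified Stieltjes constants $\tilde\gamma_k(q)$ are defined by the Taylor expansion $\zeta_E(z,q)=\sum_{k=0}^\infty\frac{(-1)^k\tilde\gamma_k(q)}{k!}(z-1)^k$. $s(n,k)$ are the (signed) Stirling numbers of the first kind: $x(x-1)\cdots(x-n+1)=\sum_{k=0}^n s(n,k)x^k$. *)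

theory Defs
  imports "HOL-Complex_Analysis.Complex_Analysis" "HOL-Combinatorics.Stirling"
begin

definition zetaE :: "complex \<Rightarrow> real \<Rightarrow> complex" where
  "zetaE z q = (THE f. f holomorphic_on UNIV \<and>
      (\<forall>w. 0 < Re w \<longrightarrow>
         (\<lambda>n. (-1) ^ n / (of_nat n + of_real q) powr w) sums f w)) z"

definition zetaE_deriv :: "nat \<Rightarrow> complex \<Rightarrow> real \<Rightarrow> complex" where
  "zetaE_deriv m z q = (deriv ^^ m) (\<lambda>w. zetaE w q) z"

definition mod_stieltjes :: "nat \<Rightarrow> real \<Rightarrow> complex" where
  "mod_stieltjes k q = (THE c. \<forall>z.
      (\<lambda>j. (-1) ^ j * c j / fact j * (z - 1) ^ j) sums zetaE z q) k"

definition stirling1_signed :: "nat \<Rightarrow> nat \<Rightarrow> int" where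
  "stirling1_signed n k = (-1) ^ (n + k) * int (stirling n k)"

definition higher_vderiv :: "nat \<Rightarrow> (real \<Rightarrow> complex) \<Rightarrow> real \<Rightarrow> complex" where
  "higher_vderiv n f = ((\<lambda>g x. vector_derivative g (at x)) ^^ n) f"

end

theory Submission
  imports Defs
begin
definition zE :: "complex \<Rightarrow> real \<Rightarrow> complex" where
  "zE w x = exp (- w * Ln (complex_of_real x))"

fun zD :: "nat \<Rightarrow> complex \<Rightarrow> real \<Rightarrow> complex" where
  "zD 0 w x = zE w x"
| "zD (Suc K) w x = zD K w x - zD K w (x + 1)"

lemma zE_norm: "x > 0 \<Longrightarrow> norm (zE w x) = x powr (- Re w)"
  by (simp add: zE_def norm_exp_eq_Re Ln_of_real powr_def)

lemma zE_shift: "x > 0 \<Longrightarrow> zE (w + 1) x = zE w x / complex_of_real x"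
proof -
  assume x: "x > 0"
  have "zE (w + 1) x = exp (- w * Ln (complex_of_real x)) * exp (- Ln (complex_of_real x))"
    by (simp add: zE_def algebra_simps flip: exp_add)
  also have "exp (- Ln (complex_of_real x)) = 1 / complex_of_real x"
    using x by (simp add: exp_minus inverse_eq_divide)
  finally show ?thesis by (simp add: zE_def)
qed

lemma zE_deriv: "x > 0 \<Longrightarrow> ((\<lambda>x. zE w x) has_vector_derivative (- w * zE (w + 1) x)) (at x)"
proof -
  assume x: "x > 0"
  have nr: "complex_of_real x \<notin> \<real>\<^sub>\<le>\<^sub>0" using x by (auto simp: nonpos_Reals_def)
  have "((\<lambda>u. exp (- w * Ln u)) has_field_derivative exp (- w * Ln (complex_of_real x)) * (- w * inverse (complex_of_real x))) (at (complex_of_real x))"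
    using nr by (auto intro!: derivative_eq_intros has_field_derivative_Ln)
  then have d: "((\<lambda>x. zE w x) has_vector_derivative exp (- w * Ln (complex_of_real x)) * (- w * inverse (complex_of_real x))) (at x)"
    unfolding zE_def by (rule has_vector_derivative_real_field)
  have eq: "- w * zE (w + 1) x = exp (- w * Ln (complex_of_real x)) * (- w * inverse (complex_of_real x))"
    by (simp only: zE_shift[OF x]) (simp add: zE_def divide_inverse mult_ac)
  show ?thesis unfolding eq by (rule d)
qed

lemma zD_deriv: "x > 0 \<Longrightarrow> ((\<lambda>x. zD K w x) has_vector_derivative (- w * zD K (w + 1) x)) (at x)"
proof (induction K arbitrary: w x)
  case 0
  then show ?case using zE_deriv[OF 0] by simp
next
  case (Suc K)
  have d1: "((\<lambda>x. x + 1) has_vector_derivative 1) (at x)"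
    by (auto intro!: derivative_eq_intros)
  have "((\<lambda>x. zD K w x) \<circ> (\<lambda>x. x + 1) has_vector_derivative 1 *\<^sub>R (- w * zD K (w + 1) (x + 1))) (at x)"
    by (rule vector_diff_chain_at[OF d1]) (use Suc in auto)
  then have d2: "((\<lambda>x. zD K w (x + 1)) has_vector_derivative (- w * zD K (w + 1) (x + 1))) (at x)"
    by (simp add: o_def)
  show ?case unfolding zD.simps right_diff_distrib by (rule has_vector_derivative_diff[OF Suc.IH[OF Suc.prems] d2])
qed

lemma powr_aux:
  fixes x t s R :: real
  assumes x: "1 \<le> x" and t: "x \<le> t" "t \<le> x + 1" and s: "- s \<le> R" and R: "0 \<le> R"
  shows "t powr (- s) \<le> 2 powr R * x powr (- s)"
proof (cases "s \<ge> 0")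
  case True
  have "t powr (- s) \<le> x powr (- s)" using True x t by (intro powr_mono2') auto
  also have "\<dots> \<le> 2 powr R * x powr (- s)"
  proof -
    have "1 \<le> (2::real) powr R" using R by (intro ge_one_powr_ge_zero) auto
    then show ?thesis using mult_right_mono[of 1 "2 powr R" "x powr (- s)"] by simp
  qed
  finally show ?thesis .
next
  case False
  have "t powr (- s) \<le> (2 * x) powr (- s)" using False x t by (intro powr_mono2) auto
  also have "\<dots> = 2 powr (- s) * x powr (- s)" using x by (simp add: powr_mult)
  also have "\<dots> \<le> 2 powr R * x powr (- s)" using s by (intro mult_right_mono) auto
  finally show ?thesis .
qed

lemma zD_bound:
  assumes "R \<ge> 0"
  shows "\<exists>C\<ge>0. \<forall>w x. norm w \<le> R \<longrightarrow> 1 \<le> x \<longrightarrow> norm (zD K w x) \<le> C * x powr (- Re w - real K)"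
  using assms
proof (induction K arbitrary: R)
  case 0
  then show ?case by (intro exI[of _ 1]) (auto simp: zE_norm)
next
  case (Suc K)
  obtain C where C: "C \<ge> 0" "\<And>w x. norm w \<le> R + 1 \<Longrightarrow> 1 \<le> x \<Longrightarrow> norm (zD K w x) \<le> C * x powr (- Re w - real K)"
    using Suc.IH[of "R + 1"] Suc.prems by auto
  show ?case
  proof (intro exI[of _ "R * C * 2 powr R"] conjI allI impI)
    show "0 \<le> R * C * 2 powr R" using C Suc.prems by auto
    fix w :: complex and x :: real
    assume w: "norm w \<le> R" and x: "1 \<le> x"
    have w1: "norm (w + 1) \<le> R + 1" using w norm_triangle_ineq[of w 1] by auto
    have bnd: "onorm (\<lambda>h. h *\<^sub>R (- w * zD K (w + 1) t)) \<le> R * C * 2 powr R * x powr (- Re w - real (Suc K))"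
      if t: "t \<in> {x..x+1}" for t
    proof -
      have "onorm (\<lambda>h. h *\<^sub>R (- w * zD K (w + 1) t)) = norm (- w * zD K (w + 1) t)"
        using onorm_scaleR_left[of "\<lambda>h::real. h" "- w * zD K (w + 1) t"] by (simp add: onorm_id)
      also have "\<dots> = norm w * norm (zD K (w + 1) t)" by (simp add: norm_mult)
      also have "\<dots> \<le> R * (C * t powr (- Re (w + 1) - real K))"
        using w C(2)[OF w1, of t] t x Suc.prems by (intro mult_mono) auto
      also have "\<dots> \<le> R * (C * (2 powr R * x powr (- Re w - real (Suc K))))"
      proof -
        have "t powr (- Re (w + 1) - real K) = t powr (- (Re w + 1 + real K))"
          by (simp add: algebra_simps)
        also have "\<dots> \<le> 2 powr R * x powr (- (Re w + 1 + real K))"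
          using t x Suc.prems abs_Re_le_cmod[of w] w by (intro powr_aux) auto
        also have "\<dots> = 2 powr R * x powr (- Re w - real (Suc K))"
          by (rule arg_cong[where f="\<lambda>e. 2 powr R * x powr e"]) simp
        finally show ?thesis using C Suc.prems by (intro mult_left_mono) auto
      qed
      finally show ?thesis by (simp add: mult_ac)
    qed
    have "norm (zD K w x - zD K w (x + 1)) \<le> (R * C * 2 powr R * x powr (- Re w - real (Suc K))) * norm (x - (x + 1))"
    proof (rule differentiable_bound[where f' = "\<lambda>t h. h *\<^sub>R (- w * zD K (w + 1) t)" and S = "{x..x+1}"])
      fix t assume "t \<in> {x..x+1}"
      then have "t > 0" using x by auto
      from zD_deriv[OF this, of K w] show "(zD K w has_derivative (\<lambda>h. h *\<^sub>R (- w * zD K (w + 1) t))) (at t within {x..x+1})"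
        by (auto simp: has_vector_derivative_def intro: has_derivative_at_withinI)
    qed (use bnd x in auto)
    then show "norm (zD (Suc K) w x) \<le> R * C * 2 powr R * x powr (- Re w - real (Suc K))"
      by simp
  qed
qed

definition zG :: "nat \<Rightarrow> complex \<Rightarrow> real \<Rightarrow> complex" where
  "zG K w q = (\<Sum>n. (-1) ^ n * zD K w (real n + q))"

definition zF :: "nat \<Rightarrow> complex \<Rightarrow> real \<Rightarrow> complex" where
  "zF K w q = (\<Sum>j<K. zD j w q / 2 ^ Suc j) + zG K w q / 2 ^ K"

definition zZ :: "complex \<Rightarrow> real \<Rightarrow> complex" where
  "zZ w q = zF (nat \<lceil>2 - Re w\<rceil>) w q"

lemma zD_bound_nat:
  assumes q: "q > 0" and s: "Re w + real K \<ge> 0"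
  obtains C where "C \<ge> 0" "\<And>n. n \<ge> 1 \<Longrightarrow> norm (zD K w (real n + q)) \<le> C * real n powr (- Re w - real K)"
proof -
  obtain C where C: "C \<ge> 0" "\<And>v x. norm v \<le> norm w \<Longrightarrow> 1 \<le> x \<Longrightarrow> norm (zD K v x) \<le> C * x powr (- Re v - real K)"
    using zD_bound[of "norm w" K] by auto
  show ?thesis
  proof (rule that[OF C(1)])
    fix n :: nat assume n: "n \<ge> 1"
    then have x: "1 \<le> real n + q" using q by simp
    have "norm (zD K w (real n + q)) \<le> C * (real n + q) powr (- Re w - real K)"
      using C(2)[OF order_refl x] .
    also have "(real n + q) powr (- Re w - real K) \<le> real n powr (- Re w - real K)"
      using s n q by (intro powr_mono2') auto
    finally show "norm (zD K w (real n + q)) \<le> C * real n powr (- Re w - real K)"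
      using C(1) by (simp add: mult_left_mono order_trans)
  qed
qed

lemma zD_summable:
  assumes q: "q > 0" and s: "Re w + real K > 1"
  shows "summable (\<lambda>n. norm (zD K w (real n + q)))"
proof -
  obtain C where C: "C \<ge> 0" "\<And>n. n \<ge> 1 \<Longrightarrow> norm (zD K w (real n + q)) \<le> C * real n powr (- Re w - real K)"
    using zD_bound_nat[OF q, of w K] s by auto
  have "summable (\<lambda>n. C * real n powr (- Re w - real K))"
    using s by (intro summable_mult) (simp add: summable_real_powr_iff)
  then show ?thesis
    by (rule summable_comparison_test'[where N = 1]) (use C in auto)
qed

lemma zD_tendsto:
  assumes q: "q > 0" and s: "Re w + real K > 0"
  shows "(\<lambda>n. zD K w (real n + q)) \<longlonglongrightarrow> 0"
proof -
  obtain C where C: "C \<ge> 0" "\<And>n. n \<ge> 1 \<Longrightarrow> norm (zD K w (real n + q)) \<le> C * real n powr (- Re w - real K)"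
    using zD_bound_nat[OF q, of w K] s by auto
  have "(\<lambda>n. real n powr (- Re w - real K)) \<longlonglongrightarrow> 0"
    using s by (intro tendsto_neg_powr filterlim_real_sequentially) auto
  then have "(\<lambda>n. C * real n powr (- Re w - real K)) \<longlonglongrightarrow> 0"
    by (rule tendsto_mult_right_zero)
  moreover have "\<forall>\<^sub>F n in sequentially. norm (zD K w (real n + q)) \<le> C * real n powr (- Re w - real K)"
    using C(2) by (intro eventually_sequentiallyI[of 1]) auto
  ultimately show ?thesis by (metis Lim_null_comparison)
qed

lemma alt_avg:
  fixes b :: "nat \<Rightarrow> complex"
  assumes b: "b \<longlonglongrightarrow> 0" and T: "(\<lambda>n. (-1) ^ n * (b n - b (Suc n))) sums T"
  shows "(\<lambda>n. (-1) ^ n * b n) sums ((b 0 + T) / 2)"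
proof -
  have ps: "(\<Sum>n<N. (-1) ^ n * (b n - b (Suc n))) = 2 * (\<Sum>n<N. (-1) ^ n * b n) - b 0 + (-1) ^ N * b N" for N
    by (induction N) (auto simp: algebra_simps)
  have eq: "(\<Sum>n<N. (-1) ^ n * b n) = ((\<Sum>n<N. (-1) ^ n * (b n - b (Suc n))) + b 0 - (-1) ^ N * b N) / 2" for N
    unfolding ps by (simp add: field_simps)
  have t1: "(\<lambda>N. (\<Sum>n<N. (-1) ^ n * (b n - b (Suc n)))) \<longlonglongrightarrow> T"
    using T by (simp add: sums_def)
  have t2: "(\<lambda>N. (-1) ^ N * b N) \<longlonglongrightarrow> 0"
  proof -
    have "(\<lambda>N. norm (b N)) \<longlonglongrightarrow> 0" using b by (rule tendsto_norm_zero)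
    then have "(\<lambda>N. norm ((-1) ^ N * b N)) \<longlonglongrightarrow> 0" by (simp add: norm_mult norm_power)
    then show ?thesis by (rule tendsto_norm_zero_cancel)
  qed
  have "(\<lambda>N. ((\<Sum>n<N. (-1) ^ n * (b n - b (Suc n))) + b 0 - (-1) ^ N * b N) / 2) \<longlonglongrightarrow> (T + b 0 - 0) / 2"
    by (intro tendsto_intros t1 t2) auto
  then show ?thesis unfolding sums_def eq by (simp add: add.commute)
qed

lemma zG_sums:
  assumes q: "q > 0" and s: "Re w + real K > 1"
  shows "(\<lambda>n. (-1) ^ n * zD K w (real n + q)) sums zG K w q"
proof -
  have "summable (\<lambda>n. norm ((-1) ^ n * zD K w (real n + q)))"
    using zD_summable[OF q s] by (simp add: norm_mult norm_power)
  then show ?thesis unfolding zG_def by (rule summable_sums[OF summable_norm_cancel])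
qed

lemma zG_step:
  assumes q: "q > 0" and s: "Re w + real K > 0"
  shows "(\<lambda>n. (-1) ^ n * zD K w (real n + q)) sums ((zD K w q + zG (Suc K) w q) / 2)"
proof -
  have "(\<lambda>n. (-1) ^ n * zD (Suc K) w (real n + q)) sums zG (Suc K) w q"
    using s by (intro zG_sums q) auto
  moreover have "zD (Suc K) w (real n + q) = zD K w (real n + q) - zD K w (real (Suc n) + q)" for n
    by (simp add: algebra_simps)
  ultimately have "(\<lambda>n. (-1) ^ n * (zD K w (real n + q) - zD K w (real (Suc n) + q))) sums zG (Suc K) w q"
    by simp
  from alt_avg[OF zD_tendsto[OF q s] this] show ?thesis by simp
qed

lemma zF_Suc:
  assumes q: "q > 0" and s: "Re w + real K > 0"
  shows "zF (Suc K) w q = zF K w q"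
proof -
  have h: "zD K w q + zG (Suc K) w q = 2 * zG K w q"
    using sums_unique[OF zG_step[OF q s]] by (simp add: zG_def)
  have e: "zD K w q / 2 ^ Suc K + zG (Suc K) w q / 2 ^ Suc K = zG K w q / 2 ^ K"
  proof -
    have "zD K w q / 2 ^ Suc K + zG (Suc K) w q / 2 ^ Suc K = (zD K w q + zG (Suc K) w q) / 2 ^ Suc K"
      by (simp add: add_divide_distrib)
    also have "\<dots> = 2 * zG K w q / 2 ^ Suc K" by (simp only: h)
    also have "\<dots> = zG K w q / 2 ^ K" by simp
    finally show ?thesis .
  qed
  show ?thesis unfolding zF_def by (simp add: e[symmetric] add.assoc)
qed

lemma zF_mono:
  assumes q: "q > 0" and s: "Re w + real K > 0" and KK: "K \<le> K'"
  shows "zF K' w q = zF K w q"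
  using KK
proof (induction K' rule: dec_induct)
  case (step m)
  then show ?case using zF_Suc[OF q, of w m] s by simp
qed simp

lemma zZ_eq:
  assumes q: "q > 0" and s: "Re w + real K > 0"
  shows "zZ w q = zF K w q"
proof -
  define k0 where "k0 = nat \<lceil>2 - Re w\<rceil>"
  have k0: "Re w + real k0 \<ge> 2" unfolding k0_def by linarith
  have m: "Re w + real (min K k0) > 0" using s k0 by (cases "K \<le> k0") (auto simp: min_def)
  have "zZ w q = zF k0 w q" by (simp add: zZ_def k0_def)
  also have "\<dots> = zF (min K k0) w q" using m by (intro zF_mono q) auto
  also have "\<dots> = zF K w q" using m by (intro zF_mono[symmetric] q) auto
  finally show ?thesis .
qed

lemma zZ_series:
  assumes q: "q > 0" and s: "Re w > 0"
  shows "(\<lambda>n. (-1) ^ n * zE w (real n + q)) sums zZ w q"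
proof -
  have "(\<lambda>n. (-1) ^ n * zD 0 w (real n + q)) sums ((zD 0 w q + zG (Suc 0) w q) / 2)"
    using s by (intro zG_step q) auto
  moreover have "zZ w q = zG 0 w q" using zZ_eq[OF q, of w 0] s by (simp add: zF_def)
  ultimately show ?thesis using sums_unique by (fastforce simp: zG_def)
qed

lemma zD_holo: "(\<lambda>w. zD K w x) holomorphic_on UNIV"
  by (induction K arbitrary: x) (auto simp: zE_def intro!: holomorphic_intros)

lemma zD_unif:
  assumes R: "R \<ge> 0" and sg: "\<sigma> \<ge> 0"
  obtains C where "C \<ge> 0" "\<And>w q n. norm w \<le> R \<Longrightarrow> Re w + real K \<ge> \<sigma> \<Longrightarrow> q > 0 \<Longrightarrow> n \<ge> 1 \<Longrightarrow>
      norm (zD K w (real n + q)) \<le> C * real n powr (- \<sigma>)"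
proof -
  obtain C where C: "C \<ge> 0" "\<And>v x. norm v \<le> R \<Longrightarrow> 1 \<le> x \<Longrightarrow> norm (zD K v x) \<le> C * x powr (- Re v - real K)"
    using zD_bound[OF R, of K] by auto
  show ?thesis
  proof (rule that[OF C(1)])
    fix w :: complex and q :: real and n :: nat
    assume w: "norm w \<le> R" and s: "Re w + real K \<ge> \<sigma>" and q: "q > 0" and n: "n \<ge> 1"
    then have x: "1 \<le> real n + q" by simp
    have "norm (zD K w (real n + q)) \<le> C * (real n + q) powr (- Re w - real K)"
      using C(2)[OF w x] .
    also have "(real n + q) powr (- Re w - real K) \<le> (real n + q) powr (- \<sigma>)"
      using s x by (intro powr_mono) auto
    also have "\<dots> \<le> real n powr (- \<sigma>)"
      using sg n q by (intro powr_mono2') auto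
    finally show "norm (zD K w (real n + q)) \<le> C * real n powr (- \<sigma>)"
      using C(1) by (simp add: mult_left_mono order_trans)
  qed
qed

lemma summable_pow2: "summable (\<lambda>n. C * real n powr (- 2))"
  by (intro summable_mult) (simp add: summable_real_powr_iff)

lemma zZ_holo_ball:
  assumes q: "q > 0"
  shows "(\<lambda>w. zZ w q) holomorphic_on ball w0 1"
proof -
  define K where "K = nat \<lceil>3 - Re w0\<rceil>"
  have K: "Re w0 + real K \<ge> 3" unfolding K_def by linarith
  define S where "S = ball w0 1"
  have inS: "Re w + real K \<ge> 2" "norm w \<le> norm w0 + 1" if "w \<in> S" for w
  proof -
    have d: "norm (w - w0) < 1" using that by (simp add: S_def dist_norm norm_minus_commute)
    have "\<bar>Re (w - w0)\<bar> \<le> norm (w - w0)" by (rule abs_Re_le_cmod)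
    then show "Re w + real K \<ge> 2" using d K by auto
    show "norm w \<le> norm w0 + 1" using d norm_triangle_ineq2[of w w0] by auto
  qed
  obtain C where C: "C \<ge> 0" "\<And>w q n. norm w \<le> norm w0 + 1 \<Longrightarrow> Re w + real K \<ge> 2 \<Longrightarrow> q > 0 \<Longrightarrow> n \<ge> 1 \<Longrightarrow>
      norm (zD K w (real n + q)) \<le> C * real n powr (- 2)"
    using zD_unif[of "norm w0 + 1" 2 K] by auto
  have hfd: "\<And>n w. w \<in> S \<Longrightarrow> ((\<lambda>w. (-1) ^ n * zD K w (real n + q)) has_field_derivative
      deriv (\<lambda>w. (-1) ^ n * zD K w (real n + q)) w) (at w)"
    by (rule holomorphic_derivI[of _ UNIV]) (auto intro!: holomorphic_intros zD_holo)
  have bnd: "\<forall>\<^sub>F n in sequentially. \<forall>w\<in>S. norm ((-1) ^ n * zD K w (real n + q)) \<le> C * real n powr (- 2)"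
    using C(2) inS q by (intro eventually_sequentiallyI[of 1]) (auto simp: norm_mult norm_power)
  obtain g g' where g: "\<forall>w\<in>S. ((\<lambda>n. (-1) ^ n * zD K w (real n + q)) sums g w) \<and>
      ((\<lambda>n. deriv (\<lambda>w. (-1) ^ n * zD K w (real n + q)) w) sums g' w) \<and> (g has_field_derivative g' w) (at w)"
    using series_and_derivative_comparison[OF _ summable_pow2 hfd bnd] unfolding S_def by blast
  have "g holomorphic_on S"
    using g unfolding S_def by (subst holomorphic_on_open) auto
  moreover have "zG K w q = g w" if "w \<in> S" for w
  proof -
    have "(\<lambda>n. (-1) ^ n * zD K w (real n + q)) sums g w" using g that by blast
    then show ?thesis unfolding zG_def by (rule sums_unique[symmetric])
  qed
  ultimately have "(\<lambda>w. zG K w q) holomorphic_on S"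
    using holomorphic_cong[OF refl, of S "\<lambda>w. zG K w q" g] by blast
  then have "(\<lambda>w. zF K w q) holomorphic_on S"
    unfolding zF_def by (intro holomorphic_intros zD_holo[THEN holomorphic_on_subset]) auto
  moreover have "zZ w q = zF K w q" if "w \<in> S" for w
    using inS[OF that] by (intro zZ_eq q) auto
  ultimately show ?thesis
    using holomorphic_cong[OF refl, of S "\<lambda>w. zZ w q" "\<lambda>w. zF K w q"] unfolding S_def by blast
qed

lemma zZ_holo:
  assumes q: "q > 0"
  shows "(\<lambda>w. zZ w q) holomorphic_on UNIV"
proof -
  have "\<exists>f'. ((\<lambda>w. zZ w q) has_field_derivative f') (at w0)" for w0
    using zZ_holo_ball[OF q, of w0] by (subst (asm) holomorphic_on_open) auto
  then show ?thesis by (subst holomorphic_on_open) auto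
qed

lemma zE_cont: "continuous_on (UNIV \<times> {0<..}) (\<lambda>p. zE (fst p) (snd p))"
  unfolding zE_def
  by (intro continuous_intros) (auto simp: nonpos_Reals_def)

lemma zD_cont: "continuous_on (UNIV \<times> {0<..}) (\<lambda>p. zD K (fst p) (snd p))"
proof (induction K)
  case 0
  then show ?case using zE_cont by simp
next
  case (Suc K)
  have "continuous_on (UNIV \<times> {0<..}) (\<lambda>p. zD K (fst (fst p, snd p + 1)) (snd (fst p, snd p + 1)))"
    by (rule continuous_on_compose2[OF Suc]) (auto intro!: continuous_intros)
  then show ?case using Suc by (simp add: continuous_on_diff)
qed

lemma zD_cont_shift: "continuous_on (UNIV \<times> {0<..}) (\<lambda>p. zD K (fst p) (c + snd p))" if "c \<ge> 0"
proof -
  have "continuous_on (UNIV \<times> {0<..}) (\<lambda>p. zD K (fst (fst p, c + snd p)) (snd (fst p, c + snd p)))"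
    by (rule continuous_on_compose2[OF zD_cont]) (use that in \<open>auto intro!: continuous_intros\<close>)
  then show ?thesis by simp
qed

lemma zZ_cont: "continuous_on (UNIV \<times> {0<..}) (\<lambda>p. zZ (fst p) (snd p))"
proof (rule continuous_at_imp_continuous_on, rule ballI)
  fix p0 :: "complex \<times> real"
  assume p0: "p0 \<in> UNIV \<times> {0<..}"
  define w0 where "w0 = fst p0"
  define q0 where "q0 = snd p0"
  have q0: "q0 > 0" using p0 by (auto simp: q0_def mem_Times_iff)
  have p0e: "p0 = (w0, q0)" by (simp add: w0_def q0_def)
  define K where "K = nat \<lceil>3 - Re w0\<rceil>"
  have K: "Re w0 + real K \<ge> 3" unfolding K_def by linarith
  define T where "T = ball w0 1 \<times> {0::real<..}"
  have T: "open T" unfolding T_def by (intro open_Times) auto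
  have inT: "Re w + real K \<ge> 2" "norm w \<le> norm w0 + 1" "q > 0" if "(w, q) \<in> T" for w q
  proof -
    have d: "norm (w - w0) < 1" using that by (simp add: T_def dist_norm norm_minus_commute)
    have "\<bar>Re (w - w0)\<bar> \<le> norm (w - w0)" by (rule abs_Re_le_cmod)
    then show "Re w + real K \<ge> 2" using d K by auto
    show "norm w \<le> norm w0 + 1" using d norm_triangle_ineq2[of w w0] by auto
    show "q > 0" using that by (simp add: T_def)
  qed
  have TU: "T \<subseteq> UNIV \<times> {0<..}" unfolding T_def by auto
  obtain C where C: "C \<ge> 0" "\<And>w q n. norm w \<le> norm w0 + 1 \<Longrightarrow> Re w + real K \<ge> 2 \<Longrightarrow> q > 0 \<Longrightarrow> n \<ge> 1 \<Longrightarrow>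
      norm (zD K w (real n + q)) \<le> C * real n powr (- 2)"
    using zD_unif[of "norm w0 + 1" 2 K] by auto
  have ul: "uniform_limit T (\<lambda>n p. \<Sum>i<n. (-1) ^ i * zD K (fst p) (real i + snd p))
      (\<lambda>p. \<Sum>i. (-1) ^ i * zD K (fst p) (real i + snd p)) sequentially"
    by (rule Weierstrass_m_test_ev[OF _ summable_pow2[of C]])
       (use C(2) inT in \<open>intro eventually_sequentiallyI[of 1], auto simp: norm_mult norm_power\<close>)
  have "continuous_on T (\<lambda>p. \<Sum>i. (-1) ^ i * zD K (fst p) (real i + snd p))"
  proof (rule uniform_limit_theorem[OF _ ul])
    show "\<forall>\<^sub>F n in sequentially. continuous_on T (\<lambda>p. \<Sum>i<n. (-1) ^ i * zD K (fst p) (real i + snd p))"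
      by (intro always_eventually allI continuous_on_sum continuous_on_mult continuous_on_const
           continuous_on_subset[OF zD_cont_shift TU]) auto
  qed simp
  then have cG: "continuous_on T (\<lambda>p. zG K (fst p) (snd p))" by (simp add: zG_def)
  have "continuous_on T (\<lambda>p. zF K (fst p) (snd p))"
    unfolding zF_def
    by (intro continuous_on_add continuous_on_sum continuous_on_divide continuous_on_const cG
          continuous_on_subset[OF zD_cont TU]) auto
  moreover have "zZ (fst p) (snd p) = zF K (fst p) (snd p)" if "p \<in> T" for p
    using inT[of "fst p" "snd p"] that by (intro zZ_eq) auto
  ultimately have "continuous_on T (\<lambda>p. zZ (fst p) (snd p))"
    using continuous_on_cong[OF refl, of T "\<lambda>p. zZ (fst p) (snd p)" "\<lambda>p. zF K (fst p) (snd p)"] by blast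
  moreover have "(w0, q0) \<in> T" using q0 by (simp add: T_def)
  ultimately show "isCont (\<lambda>p. zZ (fst p) (snd p)) p0"
    unfolding p0e
    using T continuous_on_eq_continuous_at by blast
qed

lemma zD_deriv_shift:
  assumes "c + x > 0"
  shows "((\<lambda>x. zD K w (c + x)) has_vector_derivative (- w * zD K (w + 1) (c + x))) (at x)"
proof -
  have d1: "((\<lambda>x. c + x) has_vector_derivative 1) (at x)"
    by (auto intro!: derivative_eq_intros)
  have "((\<lambda>x. zD K w x) \<circ> (\<lambda>x. c + x) has_vector_derivative 1 *\<^sub>R (- w * zD K (w + 1) (c + x))) (at x)"
    by (rule vector_diff_chain_at[OF d1]) (use assms zD_deriv in auto)
  then show ?thesis by (simp add: o_def)
qed

lemma zG_deriv:
  assumes q0: "q0 > 0" and s: "Re w + real K \<ge> 2"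
  shows "((\<lambda>q. zG K w q) has_vector_derivative (- w * zG K (w + 1) q0)) (at q0)"
proof -
  define S where "S = {0::real<..}"
  define f where "f n q = (\<Sum>i<n. (-1) ^ i * zD K w (real i + q))" for n q
  define A where "A n q = (\<Sum>i<n. (-1) ^ i * (- w * zD K (w + 1) (real i + q)))" for n q
  define L where "L q = - w * zG K (w + 1) q" for q
  have der: "((f n) has_derivative (\<lambda>h. h *\<^sub>R A n x)) (at x within S)" if "x \<in> S" for n x
  proof -
    have "((f n) has_vector_derivative A n x) (at x)"
      unfolding f_def A_def
      by (intro has_vector_derivative_sum has_vector_derivative_mult_right zD_deriv_shift)
         (use that in \<open>auto simp: S_def\<close>)
    then show ?thesis by (auto simp: has_vector_derivative_def intro: has_derivative_at_withinI)
  qed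
  obtain C where C: "C \<ge> 0" "\<And>v q n. norm v \<le> norm (w + 1) \<Longrightarrow> Re v + real K \<ge> 2 \<Longrightarrow> q > 0 \<Longrightarrow> n \<ge> 1 \<Longrightarrow>
      norm (zD K v (real n + q)) \<le> C * real n powr (- 2)"
    using zD_unif[of "norm (w + 1)" 2 K] by auto
  have ul: "uniform_limit S A (\<lambda>q. \<Sum>i. (-1) ^ i * (- w * zD K (w + 1) (real i + q))) sequentially"
    unfolding A_def
  proof (rule Weierstrass_m_test_ev[OF _ summable_pow2[of "norm w * C"]])
    show "\<forall>\<^sub>F n in sequentially. \<forall>q\<in>S. norm ((-1) ^ n * (- w * zD K (w + 1) (real n + q))) \<le> norm w * C * real n powr - 2"
    proof (intro eventually_sequentiallyI[of 1] ballI)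
      fix n :: nat and q assume n: "1 \<le> n" and q: "q \<in> S"
      have "norm ((-1) ^ n * (- w * zD K (w + 1) (real n + q))) = norm w * norm (zD K (w + 1) (real n + q))"
        by (simp add: norm_mult norm_power)
      also have "\<dots> \<le> norm w * (C * real n powr - 2)"
        using C(2)[of "w + 1" q n] n q s by (intro mult_left_mono) (auto simp: S_def)
      finally show "norm ((-1) ^ n * (- w * zD K (w + 1) (real n + q))) \<le> norm w * C * real n powr - 2"
        by (simp add: mult_ac)
    qed
  qed
  have Leq: "(\<Sum>i. (-1) ^ i * (- w * zD K (w + 1) (real i + q))) = L q" if "q \<in> S" for q
  proof -
    have "(\<lambda>i. (-1) ^ i * zD K (w + 1) (real i + q)) sums zG K (w + 1) q"
      using that s by (intro zG_sums) (auto simp: S_def)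
    then have "(\<lambda>i. - w * ((-1) ^ i * zD K (w + 1) (real i + q))) sums (- w * zG K (w + 1) q)"
      by (rule sums_mult)
    then show ?thesis unfolding L_def by (simp add: mult_ac sums_unique[symmetric])
  qed
  have nle: "\<forall>\<^sub>F n in sequentially. \<forall>x\<in>S. \<forall>h. norm (h *\<^sub>R A n x - h *\<^sub>R L x) \<le> e * norm h"
    if e: "e > 0" for e
  proof -
    have "\<forall>\<^sub>F n in sequentially. \<forall>x\<in>S. dist (A n x) (\<Sum>i. (-1) ^ i * (- w * zD K (w + 1) (real i + x))) < e"
      by (rule uniform_limitD[OF ul e])
    then show ?thesis
    proof (rule eventually_mono)
      fix n assume H: "\<forall>x\<in>S. dist (A n x) (\<Sum>i. (-1) ^ i * (- w * zD K (w + 1) (real i + x))) < e"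
      show "\<forall>x\<in>S. \<forall>h. norm (h *\<^sub>R A n x - h *\<^sub>R L x) \<le> e * norm h"
      proof (intro ballI allI)
        fix x h assume x: "x \<in> S"
        have "dist (A n x) (L x) < e" using H x Leq[OF x] by auto
        then have "norm (A n x - L x) \<le> e" by (simp add: dist_norm)
        then have "\<bar>h\<bar> * norm (A n x - L x) \<le> \<bar>h\<bar> * e" by (intro mult_left_mono) auto
        then show "norm (h *\<^sub>R A n x - h *\<^sub>R L x) \<le> e * norm h"
          by (simp add: scaleR_diff_right[symmetric] mult_ac)
      qed
    qed
  qed
  have lim: "(\<lambda>n. f n q0) \<longlonglongrightarrow> zG K w q0"
    using zG_sums[OF q0, of w K] s unfolding f_def sums_def by auto
  obtain g where g: "\<forall>x\<in>S. (\<lambda>n. f n x) \<longlonglongrightarrow> g x \<and> (g has_derivative (\<lambda>h. h *\<^sub>R L x)) (at x within S)"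
    using has_derivative_sequence[of S f "\<lambda>n x h. h *\<^sub>R A n x" "\<lambda>x h. h *\<^sub>R L x", OF _ der nle _ lim]
      q0 by (auto simp: S_def)
  have geq: "g x = zG K w x" if "x \<in> S" for x
  proof -
    have "(\<lambda>n. f n x) \<longlonglongrightarrow> zG K w x"
      using zG_sums[of x w K] s that unfolding f_def sums_def by (auto simp: S_def)
    then show ?thesis using g that LIMSEQ_unique by blast
  qed
  have "(g has_derivative (\<lambda>h. h *\<^sub>R L q0)) (at q0 within S)"
    using g q0 by (simp add: S_def)
  moreover have "at q0 within S = at q0" using q0 by (intro at_within_open) (auto simp: S_def)
  ultimately have "(g has_derivative (\<lambda>h. h *\<^sub>R L q0)) (at q0)" by simp
  then have "(g has_vector_derivative L q0) (at q0)" by (simp add: has_vector_derivative_def)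
  then show ?thesis unfolding L_def
    by (rule has_vector_derivative_transform_within_open[of _ _ _ S]) (use q0 geq in \<open>auto simp: S_def\<close>)
qed

lemma zZ_qderiv:
  assumes q0: "q0 > 0"
  shows "((\<lambda>q. zZ w q) has_vector_derivative (- w * zZ (w + 1) q0)) (at q0)"
proof -
  define K where "K = nat \<lceil>2 - Re w\<rceil>"
  have K: "Re w + real K \<ge> 2" unfolding K_def by linarith
  have d1: "((\<lambda>q. \<Sum>j<K. zD j w q * inverse (2 ^ Suc j)) has_vector_derivative
      (\<Sum>j<K. (- w * zD j (w + 1) q0) * inverse (2 ^ Suc j))) (at q0)"
    by (intro has_vector_derivative_sum has_vector_derivative_mult_left zD_deriv q0)
  have d2: "((\<lambda>q. zG K w q * inverse (2 ^ K)) has_vector_derivative (- w * zG K (w + 1) q0) * inverse (2 ^ K)) (at q0)"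
    by (intro has_vector_derivative_mult_left zG_deriv q0 K)
  have d: "((\<lambda>q. zF K w q) has_vector_derivative - w * zF K (w + 1) q0) (at q0)"
  proof -
    have "((\<lambda>q. (\<Sum>j<K. zD j w q * inverse (2 ^ Suc j)) + zG K w q * inverse (2 ^ K)) has_vector_derivative
      (\<Sum>j<K. (- w * zD j (w + 1) q0) * inverse (2 ^ Suc j)) + (- w * zG K (w + 1) q0) * inverse (2 ^ K)) (at q0)"
      by (rule has_vector_derivative_add[OF d1 d2])
    moreover have "(\<Sum>j<K. (- w * zD j (w + 1) q0) * inverse (2 ^ Suc j)) + (- w * zG K (w + 1) q0) * inverse (2 ^ K)
        = - w * zF K (w + 1) q0"
      unfolding zF_def by (simp only: divide_inverse distrib_left sum_distrib_left mult.assoc)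
    ultimately show ?thesis unfolding zF_def divide_inverse by simp
  qed
  have e1: "zZ (w + 1) q0 = zF K (w + 1) q0" using K by (intro zZ_eq q0) auto
  show ?thesis unfolding e1
    by (rule has_vector_derivative_transform_within_open[OF d, of "{0<..}"])
       (use q0 K in \<open>auto intro!: zZ_eq[symmetric]\<close>)
qed

lemma series_term_eq:
  assumes q: "q > 0"
  shows "(-1) ^ n / (of_nat n + complex_of_real q) powr w = (-1) ^ n * zE w (real n + q)"
proof -
  have pos: "real n + q > 0" using q by simp
  have e: "(of_nat n + complex_of_real q) = complex_of_real (real n + q)" by simp
  have ne: "complex_of_real (real n + q) \<noteq> 0" using pos by (metis of_real_eq_0_iff less_irrefl)
  have "(complex_of_real (real n + q)) powr w = exp (w * Ln (complex_of_real (real n + q)))"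
    by (simp only: powr_def if_not_P[OF ne])
  then show ?thesis unfolding e zE_def
    by (simp add: exp_minus divide_inverse)
qed

lemma zetaE_eq:
  assumes q: "q > 0"
  shows "zetaE w q = zZ w q"
proof -
  define P where "P f \<longleftrightarrow> f holomorphic_on UNIV \<and>
      (\<forall>w. 0 < Re w \<longrightarrow> (\<lambda>n. (-1) ^ n / (of_nat n + complex_of_real q) powr w) sums f w)" for f
  have P1: "P (\<lambda>w. zZ w q)"
    unfolding P_def series_term_eq[OF q] using zZ_holo[OF q] zZ_series[OF q] by auto
  have P2: "f = (\<lambda>w. zZ w q)" if "P f" for f
  proof
    fix z
    show "f z = zZ z q"
    proof (rule analytic_continuation_open[of "{w. 0 < Re w}" UNIV f "\<lambda>w. zZ w q"])
      show "open {w. 0 < Re w}" by (rule open_halfspace_Re_gt)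
      show "{w. 0 < Re w} \<noteq> {}" by (auto intro!: exI[of _ 1])
      show "f holomorphic_on UNIV" using that by (simp add: P_def)
      show "(\<lambda>w. zZ w q) holomorphic_on UNIV" by (rule zZ_holo[OF q])
      fix w assume "w \<in> {w. 0 < Re w}"
      then have w: "0 < Re w" by simp
      have s1: "(\<lambda>n. (-1) ^ n / (of_nat n + complex_of_real q) powr w) sums f w"
        using that w unfolding P_def by blast
      have s2: "(\<lambda>n. (-1) ^ n / (of_nat n + complex_of_real q) powr w) sums zZ w q"
        using P1 w unfolding P_def by blast
      show "f w = zZ w q" by (rule sums_unique2[OF s1 s2])
    qed auto
  qed
  have "(THE f. P f) = (\<lambda>w. zZ w q)" by (rule the_equality[of P, OF P1 P2])
  then show ?thesis unfolding zetaE_def P_def[abs_def] by (metis (no_types, lifting))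
qed

lemma zetaE_eq_fun: "q > 0 \<Longrightarrow> (\<lambda>w. zetaE w q) = (\<lambda>w. zZ w q)"
  using zetaE_eq by auto

lemma zetaE_holo: "q > 0 \<Longrightarrow> (\<lambda>w. zetaE w q) holomorphic_on UNIV"
  using zetaE_eq_fun zZ_holo by metis

lemma deriv_shift_fun: "deriv (\<lambda>w. h (w + c)) x = deriv h (x + (c::complex))"
  unfolding deriv_def by (simp add: DERIV_shift)

lemma higher_deriv_shift: "(deriv ^^ j) (\<lambda>w. f (w + c)) = (\<lambda>w. (deriv ^^ j) f (w + (c::complex)))"
proof (induction j)
  case (Suc j)
  show ?case by (rule ext) (simp add: Suc deriv_shift_fun)
qed simp

lemma ps_unique:
  fixes a :: "nat \<Rightarrow> complex"
  assumes S: "\<And>z. (\<lambda>j. a j * (z - z0) ^ j) sums f z"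
  shows "a j = (deriv ^^ j) f z0 / fact j"
proof -
  define F where "F = Abs_fps a"
  have "summable (\<lambda>n. a n * 1 ^ n)" using S[of "z0 + 1"] by (simp add: sums_iff)
  then have "conv_radius a \<ge> norm (1::complex)" by (rule conv_radius_geI)
  then have "conv_radius a > 0" by (rule order.strict_trans2[rotated]) simp
  then have rad: "fps_conv_radius F > 0" by (simp add: F_def fps_conv_radius_def)
  have ev: "eval_fps F w = f (w + z0)" for w
    using S[of "w + z0"] by (simp add: F_def eval_fps_def sums_iff)
  have "(\<lambda>w. f (w + z0)) has_fps_expansion F"
    unfolding has_fps_expansion_def using rad ev by auto
  from fps_nth_fps_expansion[OF this, of j] show ?thesis
    by (simp add: F_def higher_deriv_shift)
qed

lemma neg1_sq: "((-1::complex) ^ j) * (-1) ^ j = 1"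
  by (induction j) auto

lemma mod_stieltjes_eq:
  assumes q: "q > 0"
  shows "mod_stieltjes k q = (-1) ^ k * (deriv ^^ k) (\<lambda>w. zetaE w q) 1"
proof -
  define c0 where "c0 j = (-1) ^ j * (deriv ^^ j) (\<lambda>w. zetaE w q) 1" for j
  define Q where "Q c \<longleftrightarrow> (\<forall>z. (\<lambda>j. (-1) ^ j * c j / fact j * (z - 1) ^ j) sums zetaE z q)" for c
  have Q1: "Q c0"
    unfolding Q_def
  proof
    fix z :: complex
    have "(\<lambda>j. (deriv ^^ j) (\<lambda>w. zetaE w q) 1 / fact j * (z - 1) ^ j) sums zetaE z q"
      by (rule holomorphic_power_series[of _ 1 "norm (z - 1) + 1"])
         (use zetaE_holo[OF q] in \<open>auto intro: holomorphic_on_subset simp: dist_norm norm_minus_commute\<close>)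
    moreover have "(-1) ^ j * c0 j = (deriv ^^ j) (\<lambda>w. zetaE w q) 1" for j
      unfolding c0_def by (simp add: mult.assoc[symmetric] neg1_sq)
    ultimately show "(\<lambda>j. (-1) ^ j * c0 j / fact j * (z - 1) ^ j) sums zetaE z q" by simp
  qed
  have Q2: "c = c0" if "Q c" for c
  proof
    fix j
    have "(-1) ^ j * c j / fact j = (deriv ^^ j) (\<lambda>w. zetaE w q) 1 / fact j"
      by (rule ps_unique[where f = "\<lambda>z. zetaE z q"]) (use that in \<open>simp add: Q_def\<close>)
    then have "(-1) ^ j * c j = (deriv ^^ j) (\<lambda>w. zetaE w q) 1"
      by (simp add: field_simps)
    then have "(-1) ^ j * ((-1) ^ j * c j) = (-1) ^ j * (deriv ^^ j) (\<lambda>w. zetaE w q) 1" by simp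
    then show "c j = c0 j" unfolding c0_def by (simp add: mult.assoc[symmetric] neg1_sq)
  qed
  have "(THE c. Q c) = c0" by (rule the_equality[of Q, OF Q1 Q2])
  then show ?thesis unfolding mod_stieltjes_def Q_def[abs_def] c0_def by (metis (no_types, lifting))
qed

lemma hv_Suc: "higher_vderiv (Suc n) f = higher_vderiv n (\<lambda>x. vector_derivative f (at x))"
  unfolding higher_vderiv_def by (simp only: funpow_Suc_right o_def)

lemma hv_0: "higher_vderiv 0 f = f"
  unfolding higher_vderiv_def by simp

lemma vd_local:
  assumes S: "open S" "x \<in> S" and eq: "\<And>y. y \<in> S \<Longrightarrow> f y = g y"
  shows "vector_derivative f (at x) = vector_derivative g (at x)"
proof -
  have "(f has_vector_derivative D) (at x) \<longleftrightarrow> (g has_vector_derivative D) (at x)" for D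
  proof
    assume "(f has_vector_derivative D) (at x)"
    then show "(g has_vector_derivative D) (at x)"
      by (rule has_vector_derivative_transform_within_open[OF _ S]) (use eq in auto)
  next
    assume "(g has_vector_derivative D) (at x)"
    then show "(f has_vector_derivative D) (at x)"
      by (rule has_vector_derivative_transform_within_open[OF _ S]) (use eq in auto)
  qed
  then show ?thesis unfolding vector_derivative_def by simp
qed

lemma hv_local:
  assumes S: "open S" and eq: "\<And>y. y \<in> S \<Longrightarrow> f y = g y" and x: "x \<in> S"
  shows "higher_vderiv n f x = higher_vderiv n g x"
  using eq x
proof (induction n arbitrary: f g x)
  case 0
  then show ?case by (simp add: hv_0)
next
  case (Suc n)
  show ?case unfolding hv_Suc
    by (rule Suc.IH) (use vd_local[OF S] Suc.prems in auto)
qed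

lemma interchange:
  fixes \<Phi> \<Psi> :: "complex \<Rightarrow> real \<Rightarrow> complex"
  assumes hol\<Phi>: "\<And>q. q > 0 \<Longrightarrow> (\<lambda>w. \<Phi> w q) holomorphic_on UNIV"
    and hol\<Psi>: "\<And>q. q > 0 \<Longrightarrow> (\<lambda>w. \<Psi> w q) holomorphic_on UNIV"
    and der: "\<And>w q. q > 0 \<Longrightarrow> ((\<lambda>q. \<Phi> w q) has_vector_derivative \<Psi> w q) (at q)"
    and cont: "continuous_on (UNIV \<times> {0<..}) (\<lambda>p. \<Psi> (fst p) (snd p))"
    and q0: "q0 > 0"
  shows "((\<lambda>q. (deriv ^^ l) (\<lambda>w. \<Phi> w q) z) has_vector_derivative (deriv ^^ l) (\<lambda>w. \<Psi> w q0) z) (at q0)"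
proof -
  define \<gamma> where "\<gamma> = circlepath z 1"
  define vd where "vd t = 2 * complex_of_real pi * \<i> * exp (2 * complex_of_real pi * \<i> * complex_of_real t)" for t
  define k where "k t = vd t / (\<gamma> t - z) ^ Suc l" for t
  define c where "c = complex_of_real (2 * pi) * \<i> / fact l"
  define U where "U = {0::real<..}"
  have c: "c \<noteq> 0" by (simp add: c_def)
  have vdeq: "vector_derivative \<gamma> (at t within {0..1}) = vd t" if "t \<in> {0..1}" for t
    using that unfolding \<gamma>_def vd_def by (simp add: vector_derivative_circlepath01)
  have cauchy: "((\<lambda>t. F (\<gamma> t) * k t) has_integral c * (deriv ^^ l) F z) {0..1}"
    if F: "F holomorphic_on UNIV" for F
  proof -
    have "((\<lambda>u. F u / (u - z) ^ Suc l) has_contour_integral c * (deriv ^^ l) F z) \<gamma>"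
      unfolding \<gamma>_def c_def
      by (rule Cauchy_has_contour_integral_higher_derivative_circlepath)
         (use F in \<open>auto intro: holomorphic_on_subset holomorphic_on_imp_continuous_on\<close>)
    then have "((\<lambda>t. F (\<gamma> t) / (\<gamma> t - z) ^ Suc l * vector_derivative \<gamma> (at t within {0..1})) has_integral c * (deriv ^^ l) F z) {0..1}"
      by (simp add: has_contour_integral_def)
    then show ?thesis
      by (rule has_integral_cong[THEN iffD1, rotated]) (simp add: vdeq k_def)
  qed
  have hint: "((\<lambda>t. \<Phi> (\<gamma> t) q * k t) has_integral c * (deriv ^^ l) (\<lambda>w. \<Phi> w q) z) {0..1}" if "q \<in> U" for q
    using that by (intro cauchy hol\<Phi>) (auto simp: U_def)
  have gcont: "continuous_on {0..1} \<gamma>" using path_circlepath[of z 1] unfolding \<gamma>_def path_def .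
  have kcont: "continuous_on {0..1} k"
  proof -
    have ne: "\<gamma> t - z \<noteq> 0" for t by (simp add: \<gamma>_def circlepath)
    show ?thesis unfolding k_def vd_def
      by (intro continuous_intros gcont) (use ne in auto)
  qed
  have leib: "((\<lambda>q. integral (cbox 0 1) (\<lambda>t. \<Phi> (\<gamma> t) q * k t)) has_vector_derivative
      integral (cbox 0 1) (\<lambda>t. \<Psi> (\<gamma> t) q0 * k t)) (at q0 within U)"
  proof (rule leibniz_rule_vector_derivative)
    fix q t assume q: "q \<in> U" and t: "t \<in> cbox (0::real) 1"
    show "((\<lambda>q. \<Phi> (\<gamma> t) q * k t) has_vector_derivative \<Psi> (\<gamma> t) q * k t) (at q within U)"
      by (rule has_vector_derivative_at_within, rule has_vector_derivative_mult_left, rule der) (use q in \<open>auto simp: U_def\<close>)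
  next
    fix q assume "q \<in> U"
    then show "(\<lambda>t. \<Phi> (\<gamma> t) q * k t) integrable_on cbox 0 1"
      using hint by (auto simp: cbox_interval intro: has_integral_integrable)
  next
    have c1: "continuous_on (U \<times> cbox 0 1) (\<lambda>p. \<Psi> (fst (\<gamma> (snd p), fst p)) (snd (\<gamma> (snd p), fst p)))"
      by (rule continuous_on_compose2[OF cont])
         (auto simp: U_def cbox_interval intro!: continuous_intros continuous_on_compose2[OF gcont])
    have c2: "continuous_on (U \<times> cbox 0 1) (\<lambda>p. k (snd p))"
      by (rule continuous_on_compose2[OF kcont]) (auto simp: cbox_interval intro!: continuous_intros)
    show "continuous_on (U \<times> cbox 0 1) (\<lambda>(q, t). \<Psi> (\<gamma> t) q * k t)"
      using continuous_on_mult[OF c1 c2] by (simp add: case_prod_beta)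
  qed (use q0 in \<open>auto simp: U_def\<close>)
  have i2: "integral (cbox 0 1) (\<lambda>t. \<Psi> (\<gamma> t) q0 * k t) = c * (deriv ^^ l) (\<lambda>w. \<Psi> w q0) z"
    using cauchy[OF hol\<Psi>[OF q0]] by (simp add: cbox_interval integral_unique)
  have "at q0 within U = at q0" using q0 by (intro at_within_open) (auto simp: U_def)
  then have "((\<lambda>q. integral (cbox 0 1) (\<lambda>t. \<Phi> (\<gamma> t) q * k t) * inverse c) has_vector_derivative
      c * (deriv ^^ l) (\<lambda>w. \<Psi> w q0) z * inverse c) (at q0)"
    using has_vector_derivative_mult_left[OF leib, of "inverse c"] i2 by simp
  then have d: "((\<lambda>q. integral (cbox 0 1) (\<lambda>t. \<Phi> (\<gamma> t) q * k t) * inverse c) has_vector_derivative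
      (deriv ^^ l) (\<lambda>w. \<Psi> w q0) z) (at q0)"
    using c by (simp add: field_simps)
  show ?thesis
  proof (rule has_vector_derivative_transform_within_open[OF d, of U])
    fix q assume "q \<in> U"
    then show "integral (cbox 0 1) (\<lambda>t. \<Phi> (\<gamma> t) q * k t) * inverse c = (deriv ^^ l) (\<lambda>w. \<Phi> w q) z"
      using hint[of q] c by (simp add: cbox_interval integral_unique)
  qed (use q0 in \<open>auto simp: U_def\<close>)
qed

lemma zetaE_shift_holo: "q > 0 \<Longrightarrow> (\<lambda>w. zetaE (w + c) q) holomorphic_on UNIV"
proof -
  assume q: "q > 0"
  have h: "(\<lambda>w. w + c) holomorphic_on UNIV" by (intro holomorphic_intros)
  have "(\<lambda>w. zetaE w q) \<circ> (\<lambda>w. w + c) holomorphic_on UNIV"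
    by (rule holomorphic_on_compose[OF h]) (rule holomorphic_on_subset[OF zetaE_holo[OF q]], auto)
  then show ?thesis by (simp add: o_def)
qed

lemma zetaE_qderiv:
  assumes q0: "q0 > 0"
  shows "((\<lambda>q. zetaE u q) has_vector_derivative (- u * zetaE (u + 1) q0)) (at q0)"
proof -
  have "((\<lambda>q. zZ u q) has_vector_derivative (- u * zZ (u + 1) q0)) (at q0)" by (rule zZ_qderiv[OF q0])
  then have "((\<lambda>q. zetaE u q) has_vector_derivative (- u * zZ (u + 1) q0)) (at q0)"
    by (rule has_vector_derivative_transform_within_open[of _ _ _ "{0<..}"]) (use q0 zetaE_eq in auto)
  then show ?thesis using zetaE_eq[OF q0] by simp
qed

lemma zetaE_cont: "continuous_on (UNIV \<times> {0<..}) (\<lambda>p. zetaE (fst p) (snd p))"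
proof -
  have "continuous_on (UNIV \<times> {0<..}) (\<lambda>p. zZ (fst p) (snd p))" by (rule zZ_cont)
  moreover have "zetaE (fst p) (snd p) = zZ (fst p) (snd p)" if "p \<in> UNIV \<times> {0<..}" for p
    using that zetaE_eq by (auto simp: mem_Times_iff)
  ultimately show ?thesis
    using continuous_on_cong[OF refl, of "UNIV \<times> {0<..}" "\<lambda>p. zetaE (fst p) (snd p)" "\<lambda>p. zZ (fst p) (snd p)"] by blast
qed

lemma hv_main:
  assumes p: "p holomorphic_on UNIV" and q: "q > 0"
  shows "higher_vderiv n (\<lambda>q. (deriv ^^ l) (\<lambda>w. p w * zetaE (w + of_nat m) q) z) q =
    (deriv ^^ l) (\<lambda>w. p w * (\<Prod>i<n. - (w + of_nat (m + i))) * zetaE (w + of_nat (m + n)) q) z"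
  using p q
proof (induction n arbitrary: p m q)
  case 0
  then show ?case by (simp add: hv_0)
next
  case (Suc n)
  define p' where "p' w = p w * (- (w + of_nat m))" for w
  have p': "p' holomorphic_on UNIV" unfolding p'_def using Suc.prems by (intro holomorphic_intros) auto
  have vd: "vector_derivative (\<lambda>q. (deriv ^^ l) (\<lambda>w. p w * zetaE (w + of_nat m) q) z) (at x) =
      (deriv ^^ l) (\<lambda>w. p' w * zetaE (w + of_nat (Suc m)) x) z" if x: "x \<in> {0<..}" for x
  proof (rule vector_derivative_at, rule interchange)
    fix q :: real assume q: "q > 0"
    show "(\<lambda>w. p w * zetaE (w + of_nat m) q) holomorphic_on UNIV"
      using Suc.prems zetaE_shift_holo[OF q] by (intro holomorphic_intros) auto
    show "(\<lambda>w. p' w * zetaE (w + of_nat (Suc m)) q) holomorphic_on UNIV"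
      using p' zetaE_shift_holo[OF q] by (intro holomorphic_intros) auto
  next
    fix w :: complex and q :: real assume q: "q > 0"
    have "((\<lambda>q. p w * zetaE (w + of_nat m) q) has_vector_derivative
        p w * (- (w + of_nat m) * zetaE (w + of_nat m + 1) q)) (at q)"
      by (rule has_vector_derivative_mult_right, rule zetaE_qderiv[OF q])
    then show "((\<lambda>q. p w * zetaE (w + of_nat m) q) has_vector_derivative p' w * zetaE (w + of_nat (Suc m)) q) (at q)"
      by (simp add: p'_def mult.assoc add_ac)
  next
    have c1: "continuous_on (UNIV \<times> {0<..}) (\<lambda>x. p' (fst x))"
      by (rule continuous_on_compose2[OF holomorphic_on_imp_continuous_on[OF p']]) (auto intro!: continuous_intros)
    have c2: "continuous_on (UNIV \<times> {0::real<..}) (\<lambda>x. zetaE (fst (fst x + of_nat (Suc m), snd x)) (snd (fst x + of_nat (Suc m), snd x)))"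
      by (rule continuous_on_compose2[OF zetaE_cont]) (auto intro!: continuous_intros)
    show "continuous_on (UNIV \<times> {0<..}) (\<lambda>x. p' (fst x) * zetaE (fst x + of_nat (Suc m)) (snd x))"
      using continuous_on_mult[OF c1 c2] by simp
  qed (use x in auto)
  have "higher_vderiv (Suc n) (\<lambda>q. (deriv ^^ l) (\<lambda>w. p w * zetaE (w + of_nat m) q) z) q =
      higher_vderiv n (\<lambda>x. (deriv ^^ l) (\<lambda>w. p' w * zetaE (w + of_nat (Suc m)) x) z) q"
    unfolding hv_Suc by (rule hv_local[of "{0<..}"]) (use vd Suc.prems in auto)
  also have "\<dots> = (deriv ^^ l) (\<lambda>w. p' w * (\<Prod>i<n. - (w + of_nat (Suc m + i))) * zetaE (w + of_nat (Suc m + n)) q) z"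
    by (rule Suc.IH[OF p' Suc.prems(2)])
  also have "(\<lambda>w. p' w * (\<Prod>i<n. - (w + of_nat (Suc m + i))) * zetaE (w + of_nat (Suc m + n)) q) =
      (\<lambda>w. p w * (\<Prod>i<Suc n. - (w + of_nat (m + i))) * zetaE (w + of_nat (m + Suc n)) q)"
    by (rule ext, simp only: prod.lessThan_Suc_shift) (simp add: p'_def mult_ac add_ac)
  finally show ?case .
qed

lemma sum_zero_pow: "(\<Sum>j\<le>n. c j * (0::complex) ^ j) = c 0"
  by (induction n) auto

lemma poch_expand:
  fixes t :: complex
  shows "pochhammer (t + 1) n = (\<Sum>j\<le>n. of_nat (stirling (Suc n) (Suc j)) * t ^ j)"
proof (cases "t = 0")
  case True
  have "pochhammer (1::complex) n = fact n" by (simp add: pochhammer_fact)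
  moreover have "(\<Sum>j\<le>n. of_nat (stirling (Suc n) (Suc j)) * t ^ j) = of_nat (stirling (Suc n) (Suc 0))"
    using True sum_zero_pow[of "\<lambda>j. of_nat (stirling (Suc n) (Suc j))" n] by simp
  ultimately show ?thesis using True by (simp only: stirling_Suc_n_1) simp
next
  case False
  have "t * pochhammer (t + 1) n = pochhammer t (Suc n)" by (simp add: pochhammer_rec)
  also have "\<dots> = (\<Sum>k\<le>Suc n. of_nat (stirling (Suc n) k) * t ^ k)" by (rule stirling_pochhammer[symmetric])
  also have "\<dots> = (\<Sum>j\<le>n. of_nat (stirling (Suc n) (Suc j)) * t ^ Suc j)"
    by (subst sum.atMost_Suc_shift) simp
  also have "\<dots> = t * (\<Sum>j\<le>n. of_nat (stirling (Suc n) (Suc j)) * t ^ j)"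
    by (simp add: sum_distrib_left mult_ac)
  finally show ?thesis using False by simp
qed

lemma poch_deriv:
  "(deriv ^^ i) (\<lambda>w. pochhammer w n) (1::complex) = fact i * of_nat (stirling (Suc n) (Suc i))"
proof -
  have S: "(\<lambda>j. of_nat (stirling (Suc n) (Suc j)) * (z - 1) ^ j) sums pochhammer z n" for z :: complex
  proof -
    have "(\<lambda>j. of_nat (stirling (Suc n) (Suc j)) * (z - 1) ^ j) sums (\<Sum>j\<le>n. of_nat (stirling (Suc n) (Suc j)) * (z - 1) ^ j)"
      by (rule sums_finite) auto
    also have "(\<Sum>j\<le>n. of_nat (stirling (Suc n) (Suc j)) * (z - 1) ^ j) = pochhammer z n"
      using poch_expand[of "z - 1" n] by simp
    finally show ?thesis .
  qed
  have "(of_nat (stirling (Suc n) (Suc i)) :: complex) = (deriv ^^ i) (\<lambda>w. pochhammer w n) 1 / fact i"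
    by (rule ps_unique[OF S])
  then show ?thesis by (simp add: field_simps)
qed

lemma prod_neg_poch: "(\<Prod>i<n. - (w + of_nat i)) = (-1) ^ n * pochhammer (w::complex) n"
  by (induction n) (auto simp: pochhammer_Suc algebra_simps)

lemma sign_aux: "(-1::complex) ^ k * (-1) ^ (n + 1 + (k + 1)) = (-1) ^ n"
  by (induction k) auto


theorem theorem3p15:
  fixes q :: real and l n :: nat
  assumes "q > 0" and "n \<ge> 1"
  shows "higher_vderiv n (mod_stieltjes l) q =
    (-1) ^ l * (\<Sum>k\<le>l. (-1) ^ k * fact k * of_nat (l choose k)
       * of_int (stirling1_signed (n + 1) (k + 1))
       * zetaE_deriv (l - k) (of_nat (n + 1)) q)"
proof -
  note q = assms(1)
  define f where "f w = (-1::complex) ^ l * (\<Prod>i<n. - (w + of_nat i))" for w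
  define g where "g w = zetaE (w + of_nat n) q" for w
  have fh: "f holomorphic_on UNIV" unfolding f_def by (intro holomorphic_intros)
  have gh: "g holomorphic_on UNIV" unfolding g_def by (rule zetaE_shift_holo[OF q])
  have loc: "mod_stieltjes l x = (deriv ^^ l) (\<lambda>w. (\<lambda>_. (-1::complex) ^ l) w * zetaE (w + of_nat 0) x) 1"
    if "x \<in> {0<..}" for x
  proof -
    have x: "x > 0" using that by simp
    have "(deriv ^^ l) (\<lambda>w. (-1) ^ l * zetaE w x) 1 = (-1) ^ l * (deriv ^^ l) (\<lambda>w. zetaE w x) 1"
      by (rule higher_deriv_cmult[OF zetaE_holo[OF x]]) auto
    then show ?thesis using mod_stieltjes_eq[OF x] by simp
  qed
  have "higher_vderiv n (mod_stieltjes l) q =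
      higher_vderiv n (\<lambda>x. (deriv ^^ l) (\<lambda>w. (\<lambda>_. (-1::complex) ^ l) w * zetaE (w + of_nat 0) x) 1) q"
    by (rule hv_local[of "{0<..}"]) (use loc q in auto)
  also have "\<dots> = (deriv ^^ l) (\<lambda>w. (\<lambda>_. (-1::complex) ^ l) w * (\<Prod>i<n. - (w + of_nat (0 + i))) * zetaE (w + of_nat (0 + n)) q) 1"
    by (rule hv_main) (use q in auto)
  also have "\<dots> = (deriv ^^ l) (\<lambda>w. f w * g w) 1"
    by (simp add: f_def g_def)
  also have "\<dots> = (\<Sum>i = 0..l. of_nat (l choose i) * (deriv ^^ i) f 1 * (deriv ^^ (l - i)) g 1)"
    by (rule higher_deriv_mult[OF fh gh]) auto
  also have "\<dots> = (\<Sum>i\<le>l. (-1) ^ l * ((-1) ^ i * fact i * of_nat (l choose i)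
       * of_int (stirling1_signed (n + 1) (i + 1)) * zetaE_deriv (l - i) (of_nat (n + 1)) q))"
    unfolding atMost_atLeast0
  proof (rule sum.cong[OF refl])
    fix i assume "i \<in> {0..l}"
    have df: "(deriv ^^ i) f 1 = (-1) ^ l * ((-1) ^ n * (fact i * of_nat (stirling (Suc n) (Suc i))))"
    proof -
      have "(deriv ^^ i) f 1 = (-1) ^ l * (deriv ^^ i) (\<lambda>w. \<Prod>i<n. - (w + of_nat i)) 1"
        unfolding f_def by (rule higher_deriv_cmult[where A = UNIV]) (auto intro!: holomorphic_intros)
      also have "(\<lambda>w::complex. \<Prod>i<n. - (w + of_nat i)) = (\<lambda>w. (-1) ^ n * pochhammer w n)"
        by (rule ext) (rule prod_neg_poch)
      also have "(deriv ^^ i) (\<lambda>w. (-1) ^ n * pochhammer w n) 1 = (-1) ^ n * (deriv ^^ i) (\<lambda>w. pochhammer w n) (1::complex)"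
        by (rule higher_deriv_cmult[where A = UNIV]) (auto intro!: holomorphic_intros)
      finally show ?thesis by (simp add: poch_deriv)
    qed
    have dg: "(deriv ^^ (l - i)) g 1 = zetaE_deriv (l - i) (of_nat (n + 1)) q"
      unfolding g_def higher_deriv_shift[of _ "\<lambda>w. zetaE w q" "of_nat n"] zetaE_deriv_def
      by (simp add: add.commute)
    have st: "(-1::complex) ^ i * of_int (stirling1_signed (n + 1) (i + 1)) = (-1) ^ n * of_nat (stirling (Suc n) (Suc i))"
      unfolding stirling1_signed_def using sign_aux[of i n] by (simp add: mult.assoc[symmetric])
    have "(-1) ^ l * ((-1) ^ i * fact i * of_nat (l choose i) * of_int (stirling1_signed (n + 1) (i + 1))
        * zetaE_deriv (l - i) (of_nat (n + 1)) q) =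
        (-1) ^ l * (((-1::complex) ^ i * of_int (stirling1_signed (n + 1) (i + 1))) * fact i * of_nat (l choose i)
        * zetaE_deriv (l - i) (of_nat (n + 1)) q)"
      by (simp only: mult_ac)
    also have "\<dots> = of_nat (l choose i) * (deriv ^^ i) f 1 * (deriv ^^ (l - i)) g 1"
      unfolding st df dg by (simp only: mult_ac)
    finally show "of_nat (l choose i) * (deriv ^^ i) f 1 * (deriv ^^ (l - i)) g 1 =
        (-1) ^ l * ((-1) ^ i * fact i * of_nat (l choose i) * of_int (stirling1_signed (n + 1) (i + 1))
        * zetaE_deriv (l - i) (of_nat (n + 1)) q)" by (rule sym)
  qed
  also have "\<dots> = (-1) ^ l * (\<Sum>k\<le>l. (-1) ^ k * fact k * of_nat (l choose k)
       * of_int (stirling1_signed (n + 1) (k + 1)) * zetaE_deriv (l - k) (of_nat (n + 1)) q)"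
    by (simp add: sum_distrib_left)
  finally show ?thesis .
qed

end
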